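(* Let $\alpha,\beta\in\mathbb C$ be the two roots of $x^2-(1+\sqrt{-1})x+1=0$, let $\Gamma:=\mathrm{span}_{\mathbb Z}\{(1,1),(\alpha,\bar\beta),(\alpha^2,\bar\beta^2),(\alpha^3,\bar\beta^3)\}\subset\mathbb C^2$, and let $X:=\mathbb C^2/\Gamma$ (a complex $2$-torus). Let $f\colon X\to X$ be the automorphism induced by $(z_1,z_2)\mapsto(\alpha z_1,\bar\beta z_2)$. Let $\tau\in\mathbb C$ with $\mathrm{Im}\,\tau>0$ and let $M:=(X\times\mathbb C)/\mathbb Z^2$, where $(\ell,m)\in\mathbb Z^2$ acts by $(\ell,m)\cdot(z,w):=(f^m(z),\,w+\ell+m\tau)$; $M$ is a compact complex $3$-fold, the total space of a holomorphic fibre bundle over the elliptic curve $\mathbb C/(\mathbb Z\oplus\tau\mathbb Z)$ with fibre $X$. Then the K\"ahler rank of $M$ equals $1$.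
   Context: The K\"ahler rank of a compact complex manifold $Y$ is $\mathrm{Kr}(Y):=\max\{k\in\mathbb N: \exists$ a real $(1,1)$-form $\omega\geq0$ (non-negative) with $d\omega=0$ and $\omega^k$ not identically zero$\}$. *)

theory Defs
  imports "HOL-Analysis.Analysis"
begin

text \<open>Points of the universal cover C^2 x C = C^3 of M; coordinates (z1, z2, w)
  are the components with indices 1, 2, 3 of type 3.\<close>

type_synonym pt = "complex^3"

definition vec3 :: "complex \<Rightarrow> complex \<Rightarrow> complex \<Rightarrow> pt" where
  "vec3 a b c = (\<chi> i. if i = 1 then a else if i = 2 then b else c)"

text \<open>Real C-infinity smoothness (all iterated real directional derivatives exist
  everywhere; differentiability gives continuity of all of them).\<close>

coinductive smooth3 :: "(pt \<Rightarrow> complex) \<Rightarrow> bool" where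
  "(\<forall>x. f differentiable (at x)) \<Longrightarrow>
   (\<forall>v. smooth3 (\<lambda>x. frechet_derivative f (at x) v)) \<Longrightarrow> smooth3 f"

definition dirderiv :: "(pt \<Rightarrow> complex) \<Rightarrow> pt \<Rightarrow> pt \<Rightarrow> complex" where
  "dirderiv f v x = frechet_derivative f (at x) v"

definition wirt :: "(pt \<Rightarrow> complex) \<Rightarrow> 3 \<Rightarrow> pt \<Rightarrow> complex" where
  "wirt f l x = (dirderiv f (axis l 1) x - \<i> * dirderiv f (axis l \<i>) x) / 2"

definition wirtbar :: "(pt \<Rightarrow> complex) \<Rightarrow> 3 \<Rightarrow> pt \<Rightarrow> complex" where
  "wirtbar f l x = (dirderiv f (axis l 1) x + \<i> * dirderiv f (axis l \<i>) x) / 2"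

text \<open>A real (1,1)-form on C^3 is written
  omega = i * sum_{j,k} h_{jk} dz_j /\ d(conj z_k), with h(p) a Hermitian matrix.\<close>

definition real11 :: "(pt \<Rightarrow> complex^3^3) \<Rightarrow> bool" where
  "real11 h \<longleftrightarrow> (\<forall>j k. smooth3 (\<lambda>p. h p $ j $ k)) \<and>
                 (\<forall>p j k. h p $ j $ k = cnj (h p $ k $ j))"

definition nonneg11 :: "(pt \<Rightarrow> complex^3^3) \<Rightarrow> bool" where
  "nonneg11 h \<longleftrightarrow> (\<forall>p (v::complex^3).
     0 \<le> Re (\<Sum>j\<in>UNIV. \<Sum>k\<in>UNIV. h p $ j $ k * v $ j * cnj (v $ k)))"

text \<open>d omega = 0: vanishing of the (2,1) and (1,2) parts.\<close>

definition closed11 :: "(pt \<Rightarrow> complex^3^3) \<Rightarrow> bool" where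
  "closed11 h \<longleftrightarrow>
     (\<forall>p j k l. wirt (\<lambda>q. h q $ j $ k) l p = wirt (\<lambda>q. h q $ l $ k) j p) \<and>
     (\<forall>p j k l. wirtbar (\<lambda>q. h q $ j $ k) l p = wirtbar (\<lambda>q. h q $ j $ l) k p)"

text \<open>The deck group of C^3 -> M:
  translations by Gamma x {0}, the translation w |-> w + 1, and
  g(z1,z2,w) = (alpha z1, conj beta z2, w + tau).  A form on C^3 descends to M iff it is
  invariant under these generators; for the linear part of g with diagonal lam the
  pullback condition is h(g p)_{jk} lam_j conj(lam_k) = h(p)_{jk}.\<close>

definition Gamma :: "complex \<Rightarrow> complex \<Rightarrow> (complex \<times> complex) set" where
  "Gamma \<alpha> \<beta> = {(of_int n0 + of_int n1 * \<alpha> + of_int n2 * \<alpha>^2 + of_int n3 * \<alpha>^3,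
                   of_int n0 + of_int n1 * cnj \<beta> + of_int n2 * (cnj \<beta>)^2 + of_int n3 * (cnj \<beta>)^3)
                 | n0 n1 n2 n3 :: int. True}"

definition invariant11 :: "complex \<Rightarrow> complex \<Rightarrow> complex \<Rightarrow> (pt \<Rightarrow> complex^3^3) \<Rightarrow> bool" where
  "invariant11 \<alpha> \<beta> \<tau> h \<longleftrightarrow>
     (\<forall>(a,b)\<in>Gamma \<alpha> \<beta>. \<forall>p. h (p + vec3 a b 0) = h p) \<and>
     (\<forall>p. h (p + vec3 0 0 1) = h p) \<and>
     (let lam = vec3 \<alpha> (cnj \<beta>) 1 in
       \<forall>p j k. h (vec3 (\<alpha> * p $ 1) (cnj \<beta> * p $ 2) (p $ 3 + \<tau>)) $ j $ k
                 * lam $ j * cnj (lam $ k) = h p $ j $ k)"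

text \<open>omega^k = k! i^k sum_{|I|=|J|=k} (+-) det(h_{IJ}) dz_I /\ d(conj z_J), so
  omega^k is not identically zero iff some k x k minor of h is nonzero somewhere.\<close>

definition minor :: "complex^3^3 \<Rightarrow> 3 list \<Rightarrow> 3 list \<Rightarrow> complex" where
  "minor A I J = (\<Sum>\<sigma> | \<sigma> permutes {..<length I}.
       of_int (sign \<sigma>) * (\<Prod>a<length I. A $ (I ! a) $ (J ! \<sigma> a)))"

definition wedge_pow_nonzero :: "(pt \<Rightarrow> complex^3^3) \<Rightarrow> nat \<Rightarrow> bool" where
  "wedge_pow_nonzero h k \<longleftrightarrow> (\<exists>p I J. distinct I \<and> distinct J \<and> length I = k \<and>
       length J = k \<and> minor (h p) I J \<noteq> 0)"

definition kahler_rank_M :: "complex \<Rightarrow> complex \<Rightarrow> complex \<Rightarrow> nat" where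
  "kahler_rank_M \<alpha> \<beta> \<tau> = Max {k. \<exists>h. real11 h \<and> nonneg11 h \<and> closed11 h \<and>
        invariant11 \<alpha> \<beta> \<tau> h \<and> wedge_pow_nonzero h k}"

end

theory Submission
  imports Defs
begin

lemma per_int_real:
  fixes P :: "real \<Rightarrow> complex"
  assumes per: "\<And>x. P (x + 1) = P x"
  shows "P (x + real_of_int n) = P x"
proof -
  have nat: "P (y + real m) = P y" for y m
    by (induction m arbitrary: y) (auto simp: add.assoc[symmetric] per)
  show ?thesis
  proof (cases "n \<ge> 0")
    case True
    then obtain m where "n = int m" by (metis nonneg_int_cases)
    then show ?thesis using nat by simp
  next
    case False
    then obtain m where "n = - int m" by (metis nonpos_int_cases linear)
    then show ?thesis using nat[of "x - real m" m] by simp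
  qed
qed

lemma TI_real:
  fixes P :: "real \<Rightarrow> complex"
  assumes cont: "continuous_on UNIV P" and per: "\<And>x. P (x + 1) = P x"
  shows "integral {0..1} (\<lambda>x. P (x + c)) = integral {0..1} P"
proof -
  define r where "r = frac c"
  have r: "0 \<le> r" "r < 1" using frac_lt_1 frac_ge_0 r_def by auto
  have "c = r + real_of_int \<lfloor>c\<rfloor>" by (simp add: r_def frac_def)
  then have e1: "P (x + c) = P (x + r)" for x
    using per_int_real[of P, OF per, of "x + r" "\<lfloor>c\<rfloor>"] by (simp add: add.assoc)
  have int: "P integrable_on {a..b}" for a b
    using cont by (intro integrable_continuous_interval) (auto intro: continuous_on_subset)
  have "integral {0..1} (\<lambda>x. P (x + c)) = integral {0..1} (\<lambda>x. P (x + r))"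
    using e1 by simp
  also have "\<dots> = integral {r..1+r} P"
    using integral_shift_real_ivl[where a=r and c=r and b="1+r" and f=P] by simp
  also have "\<dots> = integral {r..1} P + integral {1..1+r} P"
    using Henstock_Kurzweil_Integration.integral_combine[where a=r and c=1 and b="1+r" and f=P] r int by simp
  also have "integral {1..1+r} P = integral {0..r} P"
    using integral_shift_real_ivl[where a=1 and c=1 and b="1+r" and f=P] per by (simp add: add.commute)
  also have "integral {r..1} P + integral {0..r} P = integral {0..1} P"
    using Henstock_Kurzweil_Integration.integral_combine[where a=0 and c=r and b=1 and f=P] r int by (simp add: add.commute)
  finally show ?thesis .
qed

lemma reflect_real:
  fixes P :: "real \<Rightarrow> complex"
  assumes cont: "continuous_on UNIV P" and per: "\<And>x. P (x + 1) = P x"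
  shows "integral {0..1} (\<lambda>x. P (- x)) = integral {0..1} P"
proof -
  have "integral {0..1} (\<lambda>x. P (- x)) = integral {-1..0} P"
    using Henstock_Kurzweil_Integration.integral_reflect_real[where b=0 and a="-1" and f=P] by simp
  also have "\<dots> = integral {0..1} (\<lambda>x. P (x + -1))"
    using integral_shift_real_ivl[where a="-1" and c="-1" and b=0 and f=P] by simp
  also have "\<dots> = integral {0..1} P"
    by (rule TI_real[OF cont per])
  finally show ?thesis .
qed

definition per :: "('a::euclidean_space \<Rightarrow> complex) \<Rightarrow> bool" where
  "per P \<longleftrightarrow> (\<forall>x. \<forall>b\<in>Basis. P (x + b) = P x)"

lemma per_prodD:
  fixes P :: "real \<times> 'b::euclidean_space \<Rightarrow> complex"
  assumes "per P"
  shows "P (x + 1, y) = P (x, y)" "b \<in> Basis \<Longrightarrow> P (x, y + b) = P (x, y)"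
  using assms unfolding per_def Basis_prod_def
  by (auto dest!: spec[of _ "(x,y)"])

lemma One_prod: "(One::'a::euclidean_space \<times> 'b::euclidean_space) = (One, One)"
proof -
  have "(One::'a \<times> 'b) = (\<Sum>u\<in>Basis. (u, 0)) + (\<Sum>v\<in>Basis. (0, v))"
    unfolding Basis_prod_def
    by (subst sum.union_disjoint) (auto simp: sum.reindex inj_on_def)
  also have "\<dots> = (One, One)"
    by (simp add: sum_prod)
  finally show ?thesis .
qed

lemma cont_comp_pair1:
  assumes "continuous_on UNIV P"
  shows "continuous_on UNIV (\<lambda>y. P (x, y))"
  by (rule continuous_on_compose2[OF assms]) (auto intro!: continuous_intros)

lemma cont_comp_pair2:
  assumes "continuous_on UNIV P"
  shows "continuous_on UNIV (\<lambda>x. P (x, y))"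
  by (rule continuous_on_compose2[OF assms]) (auto intro!: continuous_intros)

lemma TI_prod:
  fixes P :: "real \<times> 'b::euclidean_space \<Rightarrow> complex"
  assumes TIb: "\<And>Q c. continuous_on UNIV Q \<Longrightarrow> per Q \<Longrightarrow>
      integral (cbox 0 One) (\<lambda>x. Q (x + c)) = integral (cbox (0::'b) One) Q"
    and cont: "continuous_on UNIV P" and per: "per P"
  shows "integral (cbox 0 One) (\<lambda>x. P (x + c)) = integral (cbox 0 One) P"
proof -
  obtain c1 c2 where c: "c = (c1, c2)" by force
  have box: "cbox (0::real \<times> 'b) One = cbox (0, 0) (1, One)"
    by (simp add: zero_prod_def One_prod)
  have contP: "continuous_on S P" for S using cont by (rule continuous_on_subset) auto
  have "integral (cbox 0 One) (\<lambda>z. P (z + c))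
      = integral {0..1} (\<lambda>x. integral (cbox 0 One) (\<lambda>y. P (x + c1, y + c2)))"
    unfolding box c
    by (subst integral_prod_continuous)
       (auto intro!: continuous_on_compose2[OF cont] continuous_intros simp: plus_prod_def)
  also have "\<dots> = integral {0..1} (\<lambda>x. integral (cbox 0 One) (\<lambda>y. P (x + c1, y)))"
  proof (rule integral_cong)
    fix x
    show "integral (cbox 0 One) (\<lambda>y. P (x + c1, y + c2)) = integral (cbox 0 One) (\<lambda>y. P (x + c1, y))"
      by (rule TIb[where Q = "\<lambda>y. P (x + c1, y)"])
         (auto simp: cont_comp_pair1[OF cont] per_def per_prodD[OF per])
  qed
  also have "\<dots> = integral (cbox 0 One) (\<lambda>y. integral {0..1} (\<lambda>x. P (x + c1, y)))"
  proof -
    have "continuous_on UNIV (\<lambda>(x,y). P (x + c1, y))"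
      by (auto intro!: continuous_on_compose2[OF cont] continuous_intros simp: split_beta)
    then have "continuous_on (cbox (0,0) (1,One)) (\<lambda>(x,y). P (x + c1, y))"
      by (rule continuous_on_subset) auto
    from integral_swap_continuous[OF this] show ?thesis by simp
  qed
  also have "\<dots> = integral (cbox 0 One) (\<lambda>y. integral {0..1} (\<lambda>x. P (x, y)))"
  proof (rule integral_cong)
    fix y
    show "integral {0..1} (\<lambda>x. P (x + c1, y)) = integral {0..1} (\<lambda>x. P (x, y))"
      by (rule TI_real[where P = "\<lambda>x. P (x, y)"])
         (auto simp: cont_comp_pair2[OF cont] per_prodD[OF per])
  qed
  also have "\<dots> = integral {0..1} (\<lambda>x. integral (cbox 0 One) (\<lambda>y. P (x, y)))"
  proof -
    have "continuous_on (cbox (0,0) (1,One)) (\<lambda>(x,y). P (x, y))"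
      using contP by (simp add: split_beta)
    from integral_swap_continuous[OF this] show ?thesis by simp
  qed
  also have "\<dots> = integral (cbox 0 One) P"
    unfolding box
    by (subst integral_prod_continuous) (auto intro!: contP)
  finally show ?thesis .
qed

lemma TI_real':
  fixes Q :: "real \<Rightarrow> complex"
  assumes "continuous_on UNIV Q" "per Q"
  shows "integral (cbox 0 One) (\<lambda>x. Q (x + c)) = integral (cbox 0 One) Q"
  using TI_real[of Q c] assms by (simp add: per_def)

lemma TI2:
  fixes Q :: "real \<times> real \<Rightarrow> complex"
  assumes "continuous_on UNIV Q" "per Q"
  shows "integral (cbox 0 One) (\<lambda>x. Q (x + c)) = integral (cbox 0 One) Q"
  by (rule TI_prod[OF TI_real' assms])

lemma TI3:
  fixes Q :: "real \<times> real \<times> real \<Rightarrow> complex"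
  assumes "continuous_on UNIV Q" "per Q"
  shows "integral (cbox 0 One) (\<lambda>x. Q (x + c)) = integral (cbox 0 One) Q"
  by (rule TI_prod[OF TI2 assms])

type_synonym R4 = "real \<times> real \<times> real \<times> real"

lemma TI4:
  fixes Q :: "R4 \<Rightarrow> complex"
  assumes "continuous_on UNIV Q" "per Q"
  shows "integral (cbox 0 One) (\<lambda>x. Q (x + c)) = integral (cbox 0 One) Q"
  by (rule TI_prod[OF TI3 assms])

definition Rp :: "R4 \<Rightarrow> R4" where "Rp t = (snd (snd (snd t)), fst t, fst (snd t), fst (snd (snd t)))"
definition Rinv :: "R4 \<Rightarrow> R4" where "Rinv t = (fst (snd t), fst (snd (snd t)), snd (snd (snd t)), fst t)"

lemma cbox_R4: "cbox (a0::real,a1::real,a2::real,a3::real) (b0,b1,b2,b3) = {a0..b0} \<times> {a1..b1} \<times> {a2..b2} \<times> {a3..b3}"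
  by (simp add: cbox_Pair_eq)

lemma content_R4: "Henstock_Kurzweil_Integration.content (cbox (a0::real,a1::real,a2::real,a3::real) (b0,b1,b2,b3)) =
   Henstock_Kurzweil_Integration.content {a0..b0} * (Henstock_Kurzweil_Integration.content {a1..b1} *
   (Henstock_Kurzweil_Integration.content {a2..b2} * Henstock_Kurzweil_Integration.content {a3..b3}))"
  by (simp add: content_Pair)

lemma Rp_image: "Rp ` cbox u v = cbox (Rp u) (Rp v)"
proof -
  obtain u0 u1 u2 u3 v0 v1 v2 v3 where uv: "u = (u0,u1,u2,u3)" "v = (v0,v1,v2,v3)" by (metis prod.exhaust)
  show ?thesis unfolding uv cbox_R4 Rp_def
    by (auto simp: image_iff)
qed

lemma Rinv_image: "Rinv ` cbox u v = cbox (Rinv u) (Rinv v)"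
proof -
  obtain u0 u1 u2 u3 v0 v1 v2 v3 where uv: "u = (u0,u1,u2,u3)" "v = (v0,v1,v2,v3)" by (metis prod.exhaust)
  show ?thesis unfolding uv cbox_R4 Rinv_def
    by (auto simp: image_iff)
qed

lemma Rp_inv_cont: "continuous_on UNIV Rp"
  unfolding Rp_def by (auto intro!: continuous_intros)

lemma Rp_invariant:
  fixes Q :: "R4 \<Rightarrow> complex"
  assumes "continuous_on UNIV Q"
  shows "integral (cbox 0 One) (\<lambda>x. Q (Rp x)) = integral (cbox 0 One) Q"
proof -
  have hi: "(Q has_integral integral (cbox 0 One) Q) (cbox 0 One)"
    using assms by (intro integrable_integral integrable_continuous) (auto intro: continuous_on_subset)
  have "((\<lambda>x. Q (Rp x)) has_integral (1 / 1) *\<^sub>R integral (cbox 0 One) Q) (Rinv ` cbox 0 One)"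
  proof (rule has_integral_twiddle[where g = Rp and h = Rinv and r = 1 and f = Q and i = "integral (cbox 0 One) Q"])
    show "(Q has_integral integral (cbox 0 One) Q) (cbox 0 One)" by (rule hi)
    show "Rinv (Rp x) = x" for x by (simp add: Rp_def Rinv_def)
    show "Rp (Rinv x) = x" for x by (simp add: Rp_def Rinv_def)
    show "continuous (at x) Rp" for x unfolding Rp_def by (auto intro!: continuous_intros)
    show "\<exists>w z. Rp ` cbox u v = cbox w z" for u v using Rp_image by blast
    show "\<exists>w z. Rinv ` cbox u v = cbox w z" for u v using Rinv_image by blast
    show "Henstock_Kurzweil_Integration.content (Rp ` cbox u v) = 1 * Henstock_Kurzweil_Integration.content (cbox u v)" for u v
    proof -
      obtain u0 u1 u2 u3 v0 v1 v2 v3 where uv: "u = (u0,u1,u2,u3)" "v = (v0,v1,v2,v3)" by (metis prod.exhaust)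
      show ?thesis unfolding Rp_image uv by (simp add: Rp_def content_R4 del: content_real_if)
    qed
  qed simp
  moreover have "Rinv ` cbox 0 One = cbox 0 One"
    unfolding Rinv_image by (simp add: Rinv_def One_prod zero_prod_def)
  ultimately show ?thesis by (simp add: integral_unique)
qed

definition Sh :: "R4 \<Rightarrow> R4" where
  "Sh t = (- fst t, snd t + (2 * fst t, -4 * fst t, 2 * fst t))"

lemma Sh_invariant:
  fixes Q :: "R4 \<Rightarrow> complex"
  assumes cont: "continuous_on UNIV Q" and per: "per Q"
  shows "integral (cbox 0 One) (\<lambda>x. Q (Sh x)) = integral (cbox 0 One) Q"
proof -
  have box: "cbox (0::R4) One = cbox (0, 0) (1, One)"
    by (simp add: zero_prod_def One_prod)
  have contP: "continuous_on S Q" for S using cont by (rule continuous_on_subset) auto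
  have "integral (cbox 0 One) (\<lambda>x. Q (Sh x))
      = integral {0..1} (\<lambda>d. integral (cbox 0 One) (\<lambda>r. Q (- d, r + (2 * d, -4 * d, 2 * d))))"
    unfolding box Sh_def
    by (subst integral_prod_continuous)
       (auto intro!: continuous_on_compose2[OF cont] continuous_intros)
  also have "\<dots> = integral {0..1} (\<lambda>d. integral (cbox 0 One) (\<lambda>r. Q (- d, r)))"
  proof (rule integral_cong)
    fix d :: real
    show "integral (cbox 0 One) (\<lambda>r. Q (- d, r + (2 * d, -4 * d, 2 * d))) = integral (cbox 0 One) (\<lambda>r. Q (- d, r))"
      by (rule TI3[where Q = "\<lambda>r. Q (- d, r)"])
         (auto simp: cont_comp_pair1[OF cont] per_def per_prodD[OF per])
  qed
  also have "\<dots> = integral (cbox 0 One) (\<lambda>r. integral {0..1} (\<lambda>d. Q (- d, r)))"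
  proof -
    have "continuous_on UNIV (\<lambda>(x,y). Q (- x, y))"
      by (auto intro!: continuous_on_compose2[OF cont] continuous_intros simp: split_beta)
    then have "continuous_on (cbox (0,0) (1,One)) (\<lambda>(x,y). Q (- x, y))"
      by (rule continuous_on_subset) auto
    from integral_swap_continuous[OF this] show ?thesis by simp
  qed
  also have "\<dots> = integral (cbox 0 One) (\<lambda>r. integral {0..1} (\<lambda>d. Q (d, r)))"
  proof (rule integral_cong)
    fix r
    show "integral {0..1} (\<lambda>d. Q (- d, r)) = integral {0..1} (\<lambda>d. Q (d, r))"
      by (rule reflect_real[where P = "\<lambda>d. Q (d, r)"])
         (auto simp: cont_comp_pair2[OF cont] per_prodD[OF per])
  qed
  also have "\<dots> = integral {0..1} (\<lambda>d. integral (cbox 0 One) (\<lambda>r. Q (d, r)))"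
  proof -
    have "continuous_on (cbox (0,0) (1,One)) (\<lambda>(x,y). Q (x, y))"
      using contP by (simp add: split_beta)
    from integral_swap_continuous[OF this] show ?thesis by simp
  qed
  also have "\<dots> = integral (cbox 0 One) Q"
    unfolding box
    by (subst integral_prod_continuous) (auto intro!: contP)
  finally show ?thesis .
qed

definition Phi :: "R4 \<Rightarrow> R4" where
  "Phi t = (- snd (snd (snd t)), fst t + 2 * snd (snd (snd t)),
            fst (snd t) - 4 * snd (snd (snd t)), fst (snd (snd t)) + 2 * snd (snd (snd t)))"

lemma Phi_eq: "Phi t = Sh (Rp t)"
  by (simp add: Phi_def Sh_def Rp_def)

lemma Phi_invariant:
  fixes Q :: "R4 \<Rightarrow> complex"
  assumes cont: "continuous_on UNIV Q" and per: "per Q"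
  shows "integral (cbox 0 One) (\<lambda>x. Q (Phi x)) = integral (cbox 0 One) Q"
proof -
  have "continuous_on UNIV (\<lambda>x. Q (Sh x))"
    unfolding Sh_def by (auto intro!: continuous_on_compose2[OF cont] continuous_intros)
  from Rp_invariant[OF this] Sh_invariant[OF cont per] show ?thesis
    by (simp add: Phi_eq)
qed

definition ev :: "complex \<Rightarrow> R4 \<Rightarrow> complex" where
  "ev x t = of_real (fst t) + of_real (fst (snd t)) * x + of_real (fst (snd (snd t))) * x^2
            + of_real (snd (snd (snd t))) * x^3"

lemma ev_add: "ev x (t + s) = ev x t + ev x s"
  by (simp add: ev_def algebra_simps)

lemma ev_scale: "ev x (c *\<^sub>R t) = of_real c * ev x t"
  by (simp add: ev_def algebra_simps)

lemma ev_zero[simp]: "ev x 0 = 0"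
  by (simp add: ev_def)

lemma cnj_ev: "cnj (ev x t) = ev (cnj x) t"
  by (simp add: ev_def)

lemma ev_Phi:
  assumes "x^4 = 2*x^3 - 4*x^2 + 2*x - 1"
  shows "x * ev x t = ev x (Phi t)"
proof -
  have "x * ev x t = of_real (fst t) * x + of_real (fst (snd t)) * x^2 + of_real (fst (snd (snd t))) * x^3
            + of_real (snd (snd (snd t))) * x^4"
    by (simp add: ev_def algebra_simps power2_eq_square power3_eq_cube power4_eq_xxxx)
  also have "\<dots> = ev x (Phi t)"
    unfolding assms by (simp add: ev_def Phi_def algebra_simps)
  finally show ?thesis .
qed

lemma cubic_zero:
  fixes a b c d t0 t1 t2 t3 :: complex
  assumes dist: "a \<noteq> b" "a \<noteq> c" "a \<noteq> d" "b \<noteq> c" "b \<noteq> d" "c \<noteq> d"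
    and z: "t0 + t1*a + t2*a^2 + t3*a^3 = 0" "t0 + t1*b + t2*b^2 + t3*b^3 = 0"
           "t0 + t1*c + t2*c^2 + t3*c^3 = 0" "t0 + t1*d + t2*d^2 + t3*d^3 = 0"
  shows "t0 = 0 \<and> t1 = 0 \<and> t2 = 0 \<and> t3 = 0"
proof -
  define Q where "Q x y = t1 + t2*(x+y) + t3*(x^2+x*y+y^2)" for x y
  have Qe: "(x - y) * Q x y = (t0 + t1*x + t2*x^2 + t3*x^3) - (t0 + t1*y + t2*y^2 + t3*y^3)" for x y
    by (simp add: Q_def algebra_simps power2_eq_square power3_eq_cube)
  have Qab: "Q a b = 0" using Qe[of a b] z dist by simp
  have Qac: "Q a c = 0" using Qe[of a c] z dist by simp
  have Qad: "Q a d = 0" using Qe[of a d] z dist by simp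
  define R where "R x y w = t2 + t3*(x+y+w)" for x y w
  have Re: "(y - w) * R x y w = Q x y - Q x w" for x y w
    by (simp add: Q_def R_def algebra_simps power2_eq_square)
  have Rabc: "R a b c = 0" using Re[of b c a] Qab Qac dist by simp
  have Rabd: "R a b d = 0" using Re[of b d a] Qab Qad dist by simp
  have "t3 * (c - d) = R a b c - R a b d" by (simp add: R_def algebra_simps)
  then have t3: "t3 = 0" using Rabc Rabd dist by simp
  then have t2: "t2 = 0" using Rabc by (simp add: R_def)
  then have t1: "t1 = 0" using Qab t3 by (simp add: Q_def)
  then have "t0 = 0" using z(1) t2 t3 by simp
  with t1 t2 t3 show ?thesis by simp
qed

lemma not_real_root:
  assumes "z^2 - (1 + \<i>) * z + 1 = 0"
  shows "cnj z \<noteq> z"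
proof
  assume "cnj z = z"
  then have "Im z = 0" by (simp add: complex_eq_iff)
  then have "z = of_real (Re z)" by (simp add: complex_eq_iff)
  with assms have "(of_real (Re z))^2 - (1 + \<i>) * of_real (Re z) + 1 = (0::complex)" by simp
  then show False
    by (auto simp: complex_eq_iff power2_eq_square)
qed

lemma ab_facts:
  fixes \<alpha> \<beta> :: complex
  assumes ha: "\<alpha>^2 - (1 + \<i>) * \<alpha> + 1 = 0"
      and hb: "\<beta>^2 - (1 + \<i>) * \<beta> + 1 = 0"
      and ne: "\<alpha> \<noteq> \<beta>"
  shows "\<alpha> + \<beta> = 1 + \<i>" "\<alpha> * \<beta> = 1"
    "\<alpha> \<noteq> cnj \<alpha>" "\<beta> \<noteq> cnj \<beta>" "\<alpha> \<noteq> cnj \<beta>" "\<beta> \<noteq> cnj \<alpha>" "cnj \<alpha> \<noteq> cnj \<beta>"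
    "\<alpha> * cnj \<alpha> \<noteq> 1" "cnj \<beta> * \<beta> \<noteq> 1"
    "\<alpha>^4 = 2*\<alpha>^3 - 4*\<alpha>^2 + 2*\<alpha> - 1"
    "(cnj \<beta>)^4 = 2*(cnj \<beta>)^3 - 4*(cnj \<beta>)^2 + 2*(cnj \<beta>) - 1"
proof -
  have "(\<alpha> - \<beta>) * (\<alpha> + \<beta> - (1 + \<i>)) = (\<alpha>^2 - (1 + \<i>) * \<alpha> + 1) - (\<beta>^2 - (1 + \<i>) * \<beta> + 1)"
    by (simp add: algebra_simps power2_eq_square)
  then have "(\<alpha> - \<beta>) * (\<alpha> + \<beta> - (1 + \<i>)) = 0"
    using ha hb by simp
  then show sum: "\<alpha> + \<beta> = 1 + \<i>" using ne by simp
  have "\<alpha>^2 - (\<alpha> + \<beta>) * \<alpha> + 1 = 0" using ha sum by simp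
  then show prod: "\<alpha> * \<beta> = 1" by (simp add: algebra_simps power2_eq_square)
  show a1: "\<alpha> \<noteq> cnj \<alpha>" using not_real_root[OF ha] by metis
  show b1: "\<beta> \<noteq> cnj \<beta>" using not_real_root[OF hb] by metis
  show a2: "\<alpha> \<noteq> cnj \<beta>"
  proof
    assume "\<alpha> = cnj \<beta>"
    then have "Im (\<alpha> + \<beta>) = 0" by simp
    with sum show False by simp
  qed
  show b2: "\<beta> \<noteq> cnj \<alpha>"
  proof
    assume "\<beta> = cnj \<alpha>"
    then have "Im (\<alpha> + \<beta>) = 0" by simp
    with sum show False by simp
  qed
  show "cnj \<alpha> \<noteq> cnj \<beta>" using ne by simp
  show "\<alpha> * cnj \<alpha> \<noteq> 1"
  proof
    assume h: "\<alpha> * cnj \<alpha> = 1"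
    have "\<alpha> \<noteq> 0" using h by auto
    then have "cnj \<alpha> = \<beta>" using h prod by (metis mult_left_cancel)
    with b2 show False by simp
  qed
  show "cnj \<beta> * \<beta> \<noteq> 1"
  proof
    assume h: "cnj \<beta> * \<beta> = 1"
    have "\<beta> \<noteq> 0" using h by auto
    then have "cnj \<beta> = \<alpha>" using h prod by (metis mult.commute mult_left_cancel)
    with a2 show False by simp
  qed
  have split4: "x^4 = (x^4 - 2*x^3 + 4*x^2 - 2*x + 1) + (2*x^3 - 4*x^2 + 2*x - 1)" for x :: complex
    by (simp add: algebra_simps)
  have quart: "x^4 - 2*x^3 + 4*x^2 - 2*x + 1 = (x^2 - (1 + \<i>) * x + 1) * (x^2 - (1 - \<i>) * x + 1)" for x :: complex
    by (simp add: algebra_simps power2_eq_square power3_eq_cube power4_eq_xxxx complex_eq_iff)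
  show "\<alpha>^4 = 2*\<alpha>^3 - 4*\<alpha>^2 + 2*\<alpha> - 1"
    using quart[of \<alpha>] ha split4[of \<alpha>] by simp
  have "cnj (\<beta>^2 - (1 + \<i>) * \<beta> + 1) = 0" using hb by simp
  then have "(cnj \<beta>)^2 - (1 - \<i>) * cnj \<beta> + 1 = 0" by simp
  then show "(cnj \<beta>)^4 = 2*(cnj \<beta>)^3 - 4*(cnj \<beta>)^2 + 2*(cnj \<beta>) - 1"
    using quart[of "cnj \<beta>"] split4[of "cnj \<beta>"] by simp
qed

lemma ev_inj:
  fixes \<alpha> \<beta> :: complex
  assumes ha: "\<alpha>^2 - (1 + \<i>) * \<alpha> + 1 = 0"
      and hb: "\<beta>^2 - (1 + \<i>) * \<beta> + 1 = 0"
      and ne: "\<alpha> \<noteq> \<beta>"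
      and z: "ev \<alpha> t = 0" "ev (cnj \<beta>) t = 0"
  shows "t = 0"
proof -
  note F = ab_facts[OF ha hb ne]
  have z2: "ev (cnj \<alpha>) t = 0" "ev \<beta> t = 0"
    using z cnj_ev[of \<alpha> t] cnj_ev[of "cnj \<beta>" t] by auto
  have "complex_of_real (fst t) = 0 \<and> complex_of_real (fst (snd t)) = 0 \<and>
        complex_of_real (fst (snd (snd t))) = 0 \<and> complex_of_real (snd (snd (snd t))) = 0"
    by (rule cubic_zero[where a = \<alpha> and b = \<beta> and c = "cnj \<alpha>" and d = "cnj \<beta>"])
       (use F ne z z2 in \<open>auto simp: ev_def\<close>)
  then show ?thesis by (simp add: prod_eq_iff)
qed

definition Emap :: "complex \<Rightarrow> complex \<Rightarrow> R4 \<Rightarrow> R4" where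
  "Emap a b t = (Re (ev a t), Im (ev a t), Re (ev b t), Im (ev b t))"

lemma linear_Emap: "linear (Emap a b)"
  by (rule linearI) (auto simp: Emap_def ev_add ev_scale)

lemma ev_surj:
  fixes \<alpha> \<beta> :: complex
  assumes ha: "\<alpha>^2 - (1 + \<i>) * \<alpha> + 1 = 0"
      and hb: "\<beta>^2 - (1 + \<i>) * \<beta> + 1 = 0"
      and ne: "\<alpha> \<noteq> \<beta>"
  shows "\<exists>t. ev \<alpha> t = z1 \<and> ev (cnj \<beta>) t = z2"
proof -
  have "inj (Emap \<alpha> (cnj \<beta>))"
    unfolding linear_injective_0[OF linear_Emap]
  proof (intro allI impI)
    fix t assume "Emap \<alpha> (cnj \<beta>) t = 0"
    then have "ev \<alpha> t = 0" "ev (cnj \<beta>) t = 0"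
      by (auto simp: Emap_def complex_eq_iff zero_prod_def)
    then show "t = 0" by (rule ev_inj[OF ha hb ne])
  qed
  then have "surj (Emap \<alpha> (cnj \<beta>))"
    by (rule linear_inj_imp_surj[OF linear_Emap])
  then obtain t where "Emap \<alpha> (cnj \<beta>) t = (Re z1, Im z1, Re z2, Im z2)"
    by (metis surjD)
  then have "ev \<alpha> t = z1 \<and> ev (cnj \<beta>) t = z2"
    by (auto simp: Emap_def complex_eq_iff)
  then show ?thesis by blast
qed

lemma vec3_nth[simp]: "vec3 a b c $ 1 = a" "vec3 a b c $ 2 = b" "vec3 a b c $ 3 = c"
  by (simp_all add: vec3_def)

lemma vec3_add: "vec3 a b c + vec3 a' b' c' = vec3 (a+a') (b+b') (c+c')"
  by (simp add: vec_eq_iff vec3_def)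

lemma vec3_scaleR: "r *\<^sub>R vec3 a b c = vec3 (of_real r * a) (of_real r * b) (of_real r * c)"
  by (simp add: vec_eq_iff vec3_def) (simp add: scaleR_conv_of_real)

lemma vec3_eta: "vec3 (p $ 1) (p $ 2) (p $ 3) = p"
  by (simp add: vec_eq_iff vec3_def) (metis exhaust_3)

lemma axis_vec3: "axis 1 c = vec3 c 0 0" "axis 2 c = vec3 0 c 0" "axis 3 c = vec3 0 0 c"
  unfolding vec_eq_iff vec3_def axis_def using exhaust_3 by auto

lemma smooth3_diff: "smooth3 f \<Longrightarrow> f differentiable (at x)"
  by (erule smooth3.cases) auto

lemma smooth3_deriv: "smooth3 f \<Longrightarrow> smooth3 (\<lambda>x. frechet_derivative f (at x) v)"
  by (erule smooth3.cases) auto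

lemma smooth3_cont: "smooth3 f \<Longrightarrow> continuous_on S f"
  by (meson continuous_at_imp_continuous_on differentiable_imp_continuous_within smooth3_diff)

lemma smooth3_has_deriv: "smooth3 f \<Longrightarrow> (f has_derivative frechet_derivative f (at x)) (at x)"
  using frechet_derivative_works smooth3_diff by blast

lemma smooth3_lin: "smooth3 f \<Longrightarrow> linear (frechet_derivative f (at x))"
  using smooth3_has_deriv has_derivative_linear by blast

lemma FTC_dir:
  fixes F :: "pt \<Rightarrow> complex"
  assumes sm: "smooth3 F"
  shows "integral {0..1} (\<lambda>s. frechet_derivative F (at (p + s *\<^sub>R V)) V) = F (p + V) - F p"
proof -
  have der: "((\<lambda>s. F (p + s *\<^sub>R V)) has_vector_derivative frechet_derivative F (at (p + s *\<^sub>R V)) V) (at s within {0..1})" for s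
  proof -
    have "((\<lambda>s. p + s *\<^sub>R V) has_derivative (\<lambda>s. s *\<^sub>R V)) (at s within {0..1})"
      by (auto intro!: derivative_eq_intros)
    from has_derivative_compose[OF this smooth3_has_deriv[OF sm]]
    have "((\<lambda>s. F (p + s *\<^sub>R V)) has_derivative (\<lambda>x. frechet_derivative F (at (p + s *\<^sub>R V)) (x *\<^sub>R V))) (at s within {0..1})" .
    moreover have "frechet_derivative F (at (p + s *\<^sub>R V)) (x *\<^sub>R V) = x *\<^sub>R frechet_derivative F (at (p + s *\<^sub>R V)) V" for x
      using smooth3_lin[OF sm] by (simp add: linear_scale)
    ultimately show ?thesis unfolding has_vector_derivative_def by simp
  qed
  have "((\<lambda>s. frechet_derivative F (at (p + s *\<^sub>R V)) V) has_integral (F (p + 1 *\<^sub>R V) - F (p + 0 *\<^sub>R V))) {0..1}"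
    by (rule fundamental_theorem_of_calculus) (use der in auto)
  then show ?thesis by (simp add: integral_unique)
qed

definition GI :: "complex \<Rightarrow> complex \<Rightarrow> (pt \<Rightarrow> complex) \<Rightarrow> bool" where
  "GI a b F \<longleftrightarrow> (\<forall>(x,y)\<in>Gamma a b. \<forall>p. F (p + vec3 x y 0) = F p)"

lemma GI_deriv:
  assumes sm: "smooth3 F" and gi: "GI a b F"
  shows "GI a b (\<lambda>x. frechet_derivative F (at x) v)"
  unfolding GI_def
proof (intro ballI allI, clarify)
  fix x y p assume xy: "(x, y) \<in> Gamma a b"
  let ?g = "vec3 x y 0"
  have eq: "(\<lambda>q. F (q + ?g)) = F" using gi xy by (auto simp: GI_def)
  have "((\<lambda>q. q + ?g) has_derivative (\<lambda>q. q)) (at p)"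
    by (auto intro!: derivative_eq_intros)
  from has_derivative_compose[OF this smooth3_has_deriv[OF sm]]
  have "(F has_derivative frechet_derivative F (at (p + ?g))) (at p)"
    using eq by simp
  then have "frechet_derivative F (at (p + ?g)) = frechet_derivative F (at p)"
    by (rule frechet_derivative_at)
  then show "frechet_derivative F (at (p + ?g)) v = frechet_derivative F (at p) v" by simp
qed

definition Pt :: "complex \<Rightarrow> complex \<Rightarrow> R4 \<Rightarrow> complex \<Rightarrow> pt" where
  "Pt a b t w = vec3 (ev a t) (ev (cnj b) t) w"

lemma Pt_add: "Pt a b (t + s) w = Pt a b t w + vec3 (ev a s) (ev (cnj b) s) 0"
  by (simp add: Pt_def vec3_add ev_add)

lemma Pt_scale: "Pt a b (t + r *\<^sub>R c) w = Pt a b t w + r *\<^sub>R vec3 (ev a c) (ev (cnj b) c) 0"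
  by (simp add: Pt_def vec3_add vec3_scaleR ev_add ev_scale)

lemma Pt_w: "Pt a b t (w + r * z) = Pt a b t w + r *\<^sub>R vec3 0 0 z"
  by (simp add: Pt_def vec3_add vec3_scaleR)

lemma cont_Pt: "continuous_on UNIV (\<lambda>t. Pt a b t w)"
proof -
  have "continuous_on UNIV (\<lambda>t. vec3 (ev a t) (ev (cnj b) t) w)"
    unfolding vec3_def ev_def
    apply (intro continuous_on_vec_lambda)
    subgoal for i by (cases "i = 1"; cases "i = 2") (auto intro!: continuous_intros)
    done
  then show ?thesis by (simp add: Pt_def)
qed

lemma basis_Gamma:
  assumes "e \<in> (Basis :: R4 set)"
  shows "(ev a e, ev (cnj b) e) \<in> Gamma a b"
proof -
  have "e = (1,0,0,0) \<or> e = (0,1,0,0) \<or> e = (0,0,1,0) \<or> e = (0,0,0,1)"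
    using assms by (auto simp: Basis_prod_def zero_prod_def)
  then show ?thesis
  proof (elim disjE)
    assume "e = (1,0,0,0)" then show ?thesis
      unfolding Gamma_def by (simp add: ev_def) (rule exI[of _ 1], rule exI[of _ 0], rule exI[of _ 0], rule exI[of _ 0], simp)
  next
    assume "e = (0,1,0,0)" then show ?thesis
      unfolding Gamma_def by (simp add: ev_def) (rule exI[of _ 0], rule exI[of _ 1], rule exI[of _ 0], rule exI[of _ 0], simp)
  next
    assume "e = (0,0,1,0)" then show ?thesis
      unfolding Gamma_def by (simp add: ev_def) (rule exI[of _ 0], rule exI[of _ 0], rule exI[of _ 1], rule exI[of _ 0], simp)
  next
    assume "e = (0,0,0,1)" then show ?thesis
      unfolding Gamma_def by (simp add: ev_def) (rule exI[of _ 0], rule exI[of _ 0], rule exI[of _ 0], rule exI[of _ 1], simp)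
  qed
qed

lemma per_Pt:
  assumes "GI a b F"
  shows "per (\<lambda>t. F (Pt a b t w))"
  unfolding per_def
proof (intro allI ballI)
  fix x and e :: R4 assume "e \<in> Basis"
  then have m: "(ev a e, ev (cnj b) e) \<in> Gamma a b" by (rule basis_Gamma)
  have "\<forall>p. F (p + vec3 (ev a e) (ev (cnj b) e) 0) = F p" using assms m unfolding GI_def by blast
  then show "F (Pt a b (x + e) w) = F (Pt a b x w)"
    by (simp add: Pt_add)
qed

lemma integrable_R4: "continuous_on UNIV (f :: R4 \<Rightarrow> complex) \<Longrightarrow> f integrable_on cbox 0 One"
  by (rule integrable_continuous) (auto intro: continuous_on_subset)

lemma Z:
  fixes F :: "pt \<Rightarrow> complex" and \<alpha> \<beta> :: complex
  assumes ha: "\<alpha>^2 - (1 + \<i>) * \<alpha> + 1 = 0"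
      and hb: "\<beta>^2 - (1 + \<i>) * \<beta> + 1 = 0"
      and ne: "\<alpha> \<noteq> \<beta>"
      and sm: "smooth3 F" and gi: "GI \<alpha> \<beta> F"
  shows "integral (cbox 0 One) (\<lambda>t. frechet_derivative F (at (Pt \<alpha> \<beta> t w)) (vec3 x y 0)) = 0"
proof -
  obtain c where c: "ev \<alpha> c = x" "ev (cnj \<beta>) c = y" using ev_surj[OF ha hb ne] by blast
  define V where "V = vec3 x y 0"
  define G where "G t = frechet_derivative F (at (Pt \<alpha> \<beta> t w)) V" for t
  have smG: "smooth3 (\<lambda>p. frechet_derivative F (at p) V)" by (rule smooth3_deriv[OF sm])
  have contG: "continuous_on UNIV G"
    unfolding G_def by (rule continuous_on_compose2[OF smooth3_cont[OF smG] cont_Pt]) auto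
  have perG: "per G"
    unfolding G_def by (rule per_Pt[OF GI_deriv[OF sm gi]])
  have contF: "continuous_on UNIV (\<lambda>t. F (Pt \<alpha> \<beta> t w))"
    by (rule continuous_on_compose2[OF smooth3_cont[OF sm] cont_Pt]) auto
  have perF: "per (\<lambda>t. F (Pt \<alpha> \<beta> t w))" by (rule per_Pt[OF gi])
  have contF2: "continuous_on UNIV (\<lambda>t. F (Pt \<alpha> \<beta> (t + c) w))"
    by (rule continuous_on_compose2[OF contF]) (auto intro!: continuous_intros)
  have key: "integral {0..1} (\<lambda>s. G (t + s *\<^sub>R c)) = F (Pt \<alpha> \<beta> (t + c) w) - F (Pt \<alpha> \<beta> t w)" for t
  proof -
    have "G (t + s *\<^sub>R c) = frechet_derivative F (at (Pt \<alpha> \<beta> t w + s *\<^sub>R V)) V" for s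
      unfolding G_def Pt_scale c V_def ..
    then have "integral {0..1} (\<lambda>s. G (t + s *\<^sub>R c)) = F (Pt \<alpha> \<beta> t w + V) - F (Pt \<alpha> \<beta> t w)"
      using FTC_dir[OF sm, of "Pt \<alpha> \<beta> t w" V] by simp
    also have "Pt \<alpha> \<beta> t w + V = Pt \<alpha> \<beta> (t + c) w"
      using Pt_scale[of \<alpha> \<beta> t 1 c w] c by (simp add: V_def)
    finally show ?thesis .
  qed
  have "integral (cbox 0 One) (\<lambda>t. integral (cbox 0 1) (\<lambda>s. G (t + s *\<^sub>R c)))
      = integral (cbox 0 1) (\<lambda>s. integral (cbox 0 One) (\<lambda>t. G (t + s *\<^sub>R c)))"
  proof (rule integral_swap_continuous)
    have "continuous_on UNIV (\<lambda>x. G (fst x + snd x *\<^sub>R c))"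
      by (rule continuous_on_compose2[OF contG]) (auto intro!: continuous_intros)
    then show "continuous_on (cbox (0, 0) (One, 1)) (\<lambda>(t, s). G (t + s *\<^sub>R c))"
      unfolding split_beta by (rule continuous_on_subset) auto
  qed
  also have "\<dots> = integral (cbox 0 1) (\<lambda>s::real. integral (cbox 0 One) G)"
    by (rule integral_cong) (rule TI4[OF contG perG])
  also have "\<dots> = integral (cbox 0 One) G"
    by simp
  finally have "integral (cbox 0 One) G = integral (cbox 0 One) (\<lambda>t. F (Pt \<alpha> \<beta> (t + c) w) - F (Pt \<alpha> \<beta> t w))"
    using key by simp
  also have "\<dots> = integral (cbox 0 One) (\<lambda>t. F (Pt \<alpha> \<beta> (t + c) w)) - integral (cbox 0 One) (\<lambda>t. F (Pt \<alpha> \<beta> t w))"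
    by (rule integral_diff) (auto intro: integrable_R4 contF contF2)
  also have "\<dots> = 0"
    using TI4[OF contF perF, of c] by simp
  finally show ?thesis unfolding G_def V_def .
qed

lemma combo_int0:
  fixes a1 a2 b1 b2 :: "'a::euclidean_space \<Rightarrow> complex"
  assumes "(a1 has_integral 0) S" "(a2 has_integral 0) S" "(b1 has_integral 0) S" "(b2 has_integral 0) S"
  shows "((\<lambda>t. of_real r1 * ((a1 t - \<i> * a2 t)/2 + (b1 t + \<i> * b2 t)/2)
          + of_real r2 * (\<i> * ((a1 t - \<i> * a2 t)/2 - (b1 t + \<i> * b2 t)/2))) has_integral 0) S"
proof -
  have eq: "(\<lambda>t. of_real r1 * ((a1 t - \<i> * a2 t)/2 + (b1 t + \<i> * b2 t)/2)
          + of_real r2 * (\<i> * ((a1 t - \<i> * a2 t)/2 - (b1 t + \<i> * b2 t)/2)))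
      = (\<lambda>t. ((of_real r1 + \<i> * of_real r2)/2) * a1 t + ((of_real r2 - \<i> * of_real r1)/2) * a2 t
            + ((of_real r1 - \<i> * of_real r2)/2) * b1 t + ((of_real r2 + \<i> * of_real r1)/2) * b2 t)"
    by (rule ext) (simp add: field_simps)
  have "((\<lambda>t. ((of_real r1 + \<i> * of_real r2)/2) * a1 t + ((of_real r2 - \<i> * of_real r1)/2) * a2 t
            + ((of_real r1 - \<i> * of_real r2)/2) * b1 t + ((of_real r2 + \<i> * of_real r1)/2) * b2 t)
      has_integral (((of_real r1 + \<i> * of_real r2)/2) * 0 + ((of_real r2 - \<i> * of_real r1)/2) * 0
            + ((of_real r1 - \<i> * of_real r2)/2) * 0 + ((of_real r2 + \<i> * of_real r1)/2) * 0)) S"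
    by (intro has_integral_add has_integral_mult_right assms)
  then show ?thesis unfolding eq by simp
qed

lemma cx_id1: "(a::complex) = (a - \<i> * b)/2 + (a + \<i> * b)/2"
  by (simp add: complex_eq_iff field_simps)

lemma cx_id2: "(b::complex) = \<i> * ((a - \<i> * b)/2 - (a + \<i> * b)/2)"
  by (simp add: complex_eq_iff field_simps)

lemma dir_wirt:
  "dirderiv f (axis l 1) x = wirt f l x + wirtbar f l x"
  "dirderiv f (axis l \<i>) x = \<i> * (wirt f l x - wirtbar f l x)"
  unfolding wirt_def wirtbar_def by (rule cx_id1, rule cx_id2)

lemma tau_split: "vec3 0 0 \<tau> = Re \<tau> *\<^sub>R axis 3 1 + Im \<tau> *\<^sub>R axis 3 \<i>"
proof -
  have "\<tau> = of_real (Re \<tau>) + of_real (Im \<tau>) * \<i>" by (simp add: complex_eq_iff)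
  then show ?thesis by (simp add: axis_vec3 vec3_scaleR vec3_add)
qed

lemma Dtau:
  fixes h :: "pt \<Rightarrow> complex^3^3" and \<alpha> \<beta> :: complex and j :: 3
  assumes ha: "\<alpha>^2 - (1 + \<i>) * \<alpha> + 1 = 0"
      and hb: "\<beta>^2 - (1 + \<i>) * \<beta> + 1 = 0"
      and ne: "\<alpha> \<noteq> \<beta>"
      and r11: "real11 h" and cl: "closed11 h"
      and gi: "\<And>j k. GI \<alpha> \<beta> (\<lambda>q. h q $ j $ k)"
      and j: "j = 1 \<or> j = 2"
  shows "((\<lambda>t. frechet_derivative (\<lambda>q. h q $ j $ j) (at (Pt \<alpha> \<beta> t w)) (vec3 0 0 \<tau>)) has_integral 0) (cbox 0 One)"
proof -
  have sm: "smooth3 (\<lambda>q. h q $ k $ l)" for k l using r11 unfolding real11_def by blast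
  have axj: "\<exists>x y. axis j c = vec3 x y 0" for c using j by (metis axis_vec3(1,2))
  have Zj: "((\<lambda>t. dirderiv (\<lambda>q. h q $ k $ l) (axis j c) (Pt \<alpha> \<beta> t w)) has_integral 0) (cbox 0 One)" for k l c
  proof -
    obtain x y where xy: "axis j c = vec3 x y 0" using axj by blast
    have cont: "continuous_on UNIV (\<lambda>t. dirderiv (\<lambda>q. h q $ k $ l) (axis j c) (Pt \<alpha> \<beta> t w))"
      unfolding dirderiv_def
      by (rule continuous_on_compose2[OF smooth3_cont[OF smooth3_deriv[OF sm]] cont_Pt]) auto
    have "integral (cbox 0 One) (\<lambda>t. dirderiv (\<lambda>q. h q $ k $ l) (axis j c) (Pt \<alpha> \<beta> t w)) = 0"
      using Z[OF ha hb ne sm gi, where w=w and x=x and y=y] by (simp add: dirderiv_def xy)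
    with integrable_R4[OF cont] show ?thesis
      by (metis has_integral_integral)
  qed
  have c1: "wirt (\<lambda>q. h q $ j $ j) 3 q = wirt (\<lambda>q. h q $ 3 $ j) j q" for q
    using cl unfolding closed11_def by blast
  have c2: "wirtbar (\<lambda>q. h q $ j $ j) 3 q = wirtbar (\<lambda>q. h q $ j $ 3) j q" for q
    using cl unfolding closed11_def by blast
  have pw: "frechet_derivative (\<lambda>q. h q $ j $ j) (at q) (vec3 0 0 \<tau>)
     = of_real (Re \<tau>) * ((dirderiv (\<lambda>q. h q $ 3 $ j) (axis j 1) q - \<i> * dirderiv (\<lambda>q. h q $ 3 $ j) (axis j \<i>) q)/2
                          + (dirderiv (\<lambda>q. h q $ j $ 3) (axis j 1) q + \<i> * dirderiv (\<lambda>q. h q $ j $ 3) (axis j \<i>) q)/2)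
       + of_real (Im \<tau>) * (\<i> * ((dirderiv (\<lambda>q. h q $ 3 $ j) (axis j 1) q - \<i> * dirderiv (\<lambda>q. h q $ 3 $ j) (axis j \<i>) q)/2
                          - (dirderiv (\<lambda>q. h q $ j $ 3) (axis j 1) q + \<i> * dirderiv (\<lambda>q. h q $ j $ 3) (axis j \<i>) q)/2))"
    for q
  proof -
    have lin: "linear (frechet_derivative (\<lambda>q. h q $ j $ j) (at q))" by (rule smooth3_lin[OF sm])
    have "frechet_derivative (\<lambda>q. h q $ j $ j) (at q) (vec3 0 0 \<tau>)
        = of_real (Re \<tau>) * dirderiv (\<lambda>q. h q $ j $ j) (axis 3 1) q + of_real (Im \<tau>) * dirderiv (\<lambda>q. h q $ j $ j) (axis 3 \<i>) q"
      unfolding tau_split dirderiv_def using lin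
      by (simp add: linear_add linear_scale) (simp add: scaleR_conv_of_real)
    also have "\<dots> = of_real (Re \<tau>) * (wirt (\<lambda>q. h q $ 3 $ j) j q + wirtbar (\<lambda>q. h q $ j $ 3) j q)
                   + of_real (Im \<tau>) * (\<i> * (wirt (\<lambda>q. h q $ 3 $ j) j q - wirtbar (\<lambda>q. h q $ j $ 3) j q))"
      unfolding dir_wirt c1 c2 ..
    also have "\<dots> = of_real (Re \<tau>) * ((dirderiv (\<lambda>q. h q $ 3 $ j) (axis j 1) q - \<i> * dirderiv (\<lambda>q. h q $ 3 $ j) (axis j \<i>) q)/2
                          + (dirderiv (\<lambda>q. h q $ j $ 3) (axis j 1) q + \<i> * dirderiv (\<lambda>q. h q $ j $ 3) (axis j \<i>) q)/2)
       + of_real (Im \<tau>) * (\<i> * ((dirderiv (\<lambda>q. h q $ 3 $ j) (axis j 1) q - \<i> * dirderiv (\<lambda>q. h q $ 3 $ j) (axis j \<i>) q)/2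
                          - (dirderiv (\<lambda>q. h q $ j $ 3) (axis j 1) q + \<i> * dirderiv (\<lambda>q. h q $ j $ 3) (axis j \<i>) q)/2))"
      unfolding wirt_def wirtbar_def ..
    finally show ?thesis .
  qed
  show ?thesis
    unfolding pw by (rule combo_int0[OF Zj Zj Zj Zj])
qed



lemma I_shift:
  fixes h :: "pt \<Rightarrow> complex^3^3" and \<alpha> \<beta> :: complex and j :: 3
  assumes ha: "\<alpha>^2 - (1 + \<i>) * \<alpha> + 1 = 0"
      and hb: "\<beta>^2 - (1 + \<i>) * \<beta> + 1 = 0"
      and ne: "\<alpha> \<noteq> \<beta>"
      and r11: "real11 h" and cl: "closed11 h"
      and gi: "\<And>j k. GI \<alpha> \<beta> (\<lambda>q. h q $ j $ k)"
      and j: "j = 1 \<or> j = 2"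
  shows "integral (cbox 0 One) (\<lambda>t. h (Pt \<alpha> \<beta> t (w + \<tau>)) $ j $ j)
       = integral (cbox 0 One) (\<lambda>t. h (Pt \<alpha> \<beta> t w) $ j $ j)"
proof -
  define u where "u q = h q $ j $ j" for q
  have sm: "smooth3 u" using r11 unfolding real11_def u_def by blast
  define V where "V = vec3 0 0 \<tau>"
  define D where "D t (s::real) = frechet_derivative u (at (Pt \<alpha> \<beta> t (w + of_real s * \<tau>))) V" for t s
  have contU: "continuous_on UNIV (\<lambda>t. u (Pt \<alpha> \<beta> t w'))" for w'
    by (rule continuous_on_compose2[OF smooth3_cont[OF sm] cont_Pt]) auto
  have key: "u (Pt \<alpha> \<beta> t (w + \<tau>)) - u (Pt \<alpha> \<beta> t w) = integral (cbox 0 1) (\<lambda>s. D t s)" for t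
  proof -
    have "integral {0..1} (\<lambda>s. frechet_derivative u (at (Pt \<alpha> \<beta> t w + s *\<^sub>R V)) V)
        = u (Pt \<alpha> \<beta> t w + V) - u (Pt \<alpha> \<beta> t w)" by (rule FTC_dir[OF sm])
    moreover have "Pt \<alpha> \<beta> t w + s *\<^sub>R V = Pt \<alpha> \<beta> t (w + of_real s * \<tau>)" for s
      unfolding V_def Pt_w ..
    moreover have "Pt \<alpha> \<beta> t w + V = Pt \<alpha> \<beta> t (w + \<tau>)"
      using Pt_w[of \<alpha> \<beta> t w 1 \<tau>] by (simp add: V_def)
    ultimately show ?thesis by (simp add: D_def)
  qed
  have contD: "continuous_on UNIV (\<lambda>x. D (fst x) (snd x))"
  proof -
    have c1: "continuous_on UNIV (\<lambda>q. frechet_derivative u (at q) V)"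
      by (rule smooth3_cont[OF smooth3_deriv[OF sm]])
    have c2: "continuous_on UNIV (\<lambda>x::R4 \<times> real. Pt \<alpha> \<beta> (fst x) (w + of_real (snd x) * \<tau>))"
      unfolding Pt_def vec3_def ev_def
      apply (intro continuous_on_vec_lambda)
      subgoal for i by (cases "i = 1"; cases "i = 2") (auto intro!: continuous_intros)
      done
    show ?thesis unfolding D_def
      by (rule continuous_on_compose2[OF c1 c2]) auto
  qed
  have "integral (cbox 0 One) (\<lambda>t. u (Pt \<alpha> \<beta> t (w + \<tau>)) - u (Pt \<alpha> \<beta> t w))
      = integral (cbox 0 One) (\<lambda>t. integral (cbox 0 1) (\<lambda>s. D t s))"
    using key by simp
  also have "\<dots> = integral (cbox 0 1) (\<lambda>s. integral (cbox 0 One) (\<lambda>t. D t s))"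
  proof (rule integral_swap_continuous)
    show "continuous_on (cbox (0, 0) (One, 1)) (\<lambda>(t, s). D t s)"
      unfolding split_beta by (rule continuous_on_subset[OF contD]) auto
  qed
  also have "\<dots> = integral (cbox 0 (1::real)) (\<lambda>s. 0)"
  proof (rule integral_cong)
    fix s :: real
    show "integral (cbox 0 One) (\<lambda>t. D t s) = 0"
      unfolding D_def u_def V_def
      by (rule integral_unique, rule Dtau[OF ha hb ne r11 cl gi j])
  qed
  also have "\<dots> = 0" by simp
  finally have "integral (cbox 0 One) (\<lambda>t. u (Pt \<alpha> \<beta> t (w + \<tau>)) - u (Pt \<alpha> \<beta> t w)) = 0" .
  moreover have "integral (cbox 0 One) (\<lambda>t. u (Pt \<alpha> \<beta> t (w + \<tau>)) - u (Pt \<alpha> \<beta> t w))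
     = integral (cbox 0 One) (\<lambda>t. u (Pt \<alpha> \<beta> t (w + \<tau>))) - integral (cbox 0 One) (\<lambda>t. u (Pt \<alpha> \<beta> t w))"
    by (rule integral_diff) (auto intro: integrable_R4 contU)
  ultimately show ?thesis unfolding u_def by simp
qed

lemma quad_axis:
  fixes A :: "complex^3^3"
  shows "(\<Sum>a\<in>UNIV. \<Sum>b\<in>UNIV. A $ a $ b * axis j 1 $ a * cnj (axis j 1 $ b)) = A $ j $ j"
proof -
  have g: "(\<Sum>b\<in>UNIV. A $ a $ b * axis j 1 $ a * cnj (axis j 1 $ b)) = (if a = j then A $ j $ j else 0)" for a
  proof (cases "a = j")
    case True
    have "A $ a $ b * axis j 1 $ a * cnj (axis j 1 $ b) = (if b = j then A $ j $ j else 0)" for b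
      using True by (simp add: axis_def)
    then show ?thesis using True by simp
  next
    case False
    then show ?thesis by (simp add: axis_def)
  qed
  show ?thesis unfolding g by simp
qed
lemma hjj_zero:
  fixes h :: "pt \<Rightarrow> complex^3^3" and \<alpha> \<beta> :: complex and j :: 3
  assumes ha: "\<alpha>^2 - (1 + \<i>) * \<alpha> + 1 = 0"
      and hb: "\<beta>^2 - (1 + \<i>) * \<beta> + 1 = 0"
      and ne: "\<alpha> \<noteq> \<beta>"
      and r11: "real11 h" and nn: "nonneg11 h" and cl: "closed11 h"
      and inv: "invariant11 \<alpha> \<beta> \<tau> h"
      and j: "j = 1 \<or> j = 2"
  shows "h p $ j $ j = 0"
proof -
  note F = ab_facts[OF ha hb ne]
  define u where "u q = h q $ j $ j" for q
  have sm: "smooth3 u" using r11 unfolding real11_def u_def by blast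
  have gi: "GI \<alpha> \<beta> (\<lambda>q. h q $ k $ l)" for k l
  proof -
    have "\<forall>(a,b)\<in>Gamma \<alpha> \<beta>. \<forall>p. h (p + vec3 a b 0) = h p"
      using inv unfolding invariant11_def by (rule conjunct1)
    then show ?thesis unfolding GI_def by auto
  qed
  define lam where "lam = vec3 \<alpha> (cnj \<beta>) 1"
  define m where "m = lam $ j * cnj (lam $ j)"
  have m1: "m \<noteq> 1" using j F by (auto simp: m_def lam_def)
  have inv3: "h (vec3 (\<alpha> * q $ 1) (cnj \<beta> * q $ 2) (q $ 3 + \<tau>)) $ j $ j * lam $ j * cnj (lam $ j) = h q $ j $ j" for q
  proof -
    have "let lam = vec3 \<alpha> (cnj \<beta>) 1 in
       \<forall>p j k. h (vec3 (\<alpha> * p $ 1) (cnj \<beta> * p $ 2) (p $ 3 + \<tau>)) $ j $ k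
                 * lam $ j * cnj (lam $ k) = h p $ j $ k"
      using inv unfolding invariant11_def by (rule conjunct2[OF conjunct2])
    then have "\<forall>p j k. h (vec3 (\<alpha> * p $ 1) (cnj \<beta> * p $ 2) (p $ 3 + \<tau>)) $ j $ k
                 * lam $ j * cnj (lam $ k) = h p $ j $ k"
      unfolding Let_def lam_def .
    from this[rule_format, of q j j] show ?thesis .
  qed
  have PhiP: "vec3 (\<alpha> * Pt \<alpha> \<beta> t w $ 1) (cnj \<beta> * Pt \<alpha> \<beta> t w $ 2) (Pt \<alpha> \<beta> t w $ 3 + \<tau>) = Pt \<alpha> \<beta> (Phi t) (w + \<tau>)" for t w
    by (simp add: Pt_def ev_Phi F)
  have rel: "u (Pt \<alpha> \<beta> (Phi t) (w + \<tau>)) * m = u (Pt \<alpha> \<beta> t w)" for t w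
    using inv3[of "Pt \<alpha> \<beta> t w"] unfolding PhiP u_def m_def by (simp add: mult.assoc)
  have contU: "continuous_on UNIV (\<lambda>t. u (Pt \<alpha> \<beta> t w'))" for w'
    by (rule continuous_on_compose2[OF smooth3_cont[OF sm] cont_Pt]) auto
  have perU: "per (\<lambda>t. u (Pt \<alpha> \<beta> t w'))" for w'
    unfolding u_def by (rule per_Pt[OF gi])
  define I where "I w' = integral (cbox 0 One) (\<lambda>t. u (Pt \<alpha> \<beta> t w'))" for w'
  have I0: "I w' = 0" for w'
  proof -
    have "I w' = integral (cbox 0 One) (\<lambda>t. u (Pt \<alpha> \<beta> (Phi t) (w' + \<tau>)) * m)"
      unfolding I_def rel ..
    also have "\<dots> = integral (cbox 0 One) (\<lambda>t. u (Pt \<alpha> \<beta> (Phi t) (w' + \<tau>))) * m"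
      by (rule integral_mult_left)
    also have "integral (cbox 0 One) (\<lambda>t. u (Pt \<alpha> \<beta> (Phi t) (w' + \<tau>))) = I (w' + \<tau>)"
      unfolding I_def by (rule Phi_invariant[OF contU perU])
    also have "I (w' + \<tau>) = I w'"
      unfolding I_def u_def by (rule I_shift[OF ha hb ne r11 cl gi j])
    finally have "I w' * (1 - m) = 0" by (simp add: algebra_simps)
    with m1 show ?thesis by simp
  qed
  have real: "u q = of_real (Re (u q))" for q
  proof -
    have "u q = cnj (u q)" using r11 unfolding real11_def u_def by blast
    then show ?thesis by (simp add: complex_eq_iff)
  qed
  have pos: "0 \<le> Re (u q)" for q
  proof -
    have "0 \<le> Re (\<Sum>a\<in>UNIV. \<Sum>b\<in>UNIV. h q $ a $ b * axis j 1 $ a * cnj (axis j 1 $ b))"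
      using nn unfolding nonneg11_def by blast
    then show ?thesis unfolding quad_axis u_def .
  qed
  have zero_at: "u (Pt \<alpha> \<beta> c w') = 0" for c w'
  proof -
    have "integral (cbox 0 One) (\<lambda>t. u (Pt \<alpha> \<beta> (t + c) w')) = I w'"
      unfolding I_def by (rule TI4[OF contU perU])
    moreover have cont': "continuous_on UNIV (\<lambda>t. u (Pt \<alpha> \<beta> (t + c) w'))"
      by (rule continuous_on_compose2[OF contU]) (auto intro!: continuous_intros)
    moreover have "((\<lambda>t. u (Pt \<alpha> \<beta> (t + c) w')) has_integral
          integral (cbox 0 One) (\<lambda>t. u (Pt \<alpha> \<beta> (t + c) w'))) (cbox 0 One)"
      by (rule integrable_integral, rule integrable_R4, rule cont')
    ultimately have hi: "((\<lambda>t. u (Pt \<alpha> \<beta> (t + c) w')) has_integral 0) (cbox 0 One)"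
      using I0 by simp
    have "(\<lambda>t. Re (u (Pt \<alpha> \<beta> (t + c) w'))) 0 = 0"
    proof (rule has_integral_0_cbox_imp_0[where f = "\<lambda>t. Re (u (Pt \<alpha> \<beta> (t + c) w'))" and x = 0 and a = 0 and b = One])
      show "continuous_on (cbox 0 One) (\<lambda>t. Re (u (Pt \<alpha> \<beta> (t + c) w')))"
        by (intro continuous_intros continuous_on_subset[OF cont']) auto
      show "0 \<le> Re (u (Pt \<alpha> \<beta> (x + c) w'))" for x by (rule pos)
      show "((\<lambda>t. Re (u (Pt \<alpha> \<beta> (t + c) w'))) has_integral 0) (cbox 0 One)"
        using has_integral_Re[OF hi] by simp
      show "box 0 (One::R4) \<noteq> {}" by (rule box01_nonempty)
      show "(0::R4) \<in> cbox 0 One" by (simp add: mem_box)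
    qed
    then show ?thesis using real[of "Pt \<alpha> \<beta> c w'"] by simp
  qed
  obtain c where c: "ev \<alpha> c = p $ 1" "ev (cnj \<beta>) c = p $ 2" using ev_surj[OF ha hb ne] by blast
  have "Pt \<alpha> \<beta> c (p $ 3) = p" unfolding Pt_def c by (rule vec3_eta)
  then show ?thesis using zero_at[of c "p $ 3"] unfolding u_def by simp
qed

lemma quad2:
  fixes A :: "complex^3^3" and j k :: 3 and x :: complex
  assumes jk: "j \<noteq> k"
  defines "v \<equiv> (\<chi> i. if i = j then x else if i = k then 1 else 0) :: complex^3"
  shows "(\<Sum>a\<in>UNIV. \<Sum>b\<in>UNIV. A $ a $ b * v $ a * cnj (v $ b))
       = A $ j $ j * x * cnj x + A $ j $ k * x + A $ k $ j * cnj x + A $ k $ k"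
proof -
  have vb: "v $ b = (if b = j then x else 0) + (if b = k then 1 else 0)" for b
    using jk by (simp add: v_def)
  have inner: "(\<Sum>b\<in>UNIV. A $ a $ b * v $ a * cnj (v $ b)) = v $ a * A $ a $ j * cnj x + v $ a * A $ a $ k" for a
  proof -
    have "A $ a $ b * v $ a * cnj (v $ b) = (if b = j then v $ a * A $ a $ j * cnj x else 0) + (if b = k then v $ a * A $ a $ k else 0)" for b
      unfolding vb[of b] by (auto simp: algebra_simps)
    then show ?thesis by (simp add: sum.distrib)
  qed
  have "(\<Sum>a\<in>UNIV. v $ a * A $ a $ j * cnj x + v $ a * A $ a $ k)
      = (\<Sum>a\<in>UNIV. (if a = j then x * A $ j $ j * cnj x + x * A $ j $ k else 0) + (if a = k then A $ k $ j * cnj x + A $ k $ k else 0))"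
    by (rule sum.cong) (auto simp: vb algebra_simps)
  also have "\<dots> = A $ j $ j * x * cnj x + A $ j $ k * x + A $ k $ j * cnj x + A $ k $ k"
    by (simp add: sum.distrib algebra_simps)
  finally show ?thesis unfolding inner .
qed

lemma psd_offdiag:
  fixes A :: "complex^3^3" and j k :: 3
  assumes nn: "\<And>v::complex^3. 0 \<le> Re (\<Sum>a\<in>UNIV. \<Sum>b\<in>UNIV. A $ a $ b * v $ a * cnj (v $ b))"
    and herm: "\<And>a b. A $ a $ b = cnj (A $ b $ a)"
    and z: "A $ j $ j = 0"
  shows "A $ j $ k = 0"
proof (cases "j = k")
  case True then show ?thesis using z by simp
next
  case jk: False
  define a where "a = A $ j $ k"
  have Q: "0 \<le> Re (a * x + cnj a * cnj x + A $ k $ k)" for x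
  proof -
    have e: "(\<Sum>a\<in>UNIV. \<Sum>b\<in>UNIV. A $ a $ b * (\<chi> i. if i = j then x else if i = k then 1 else 0) $ a
              * cnj ((\<chi> i. if i = j then x else if i = k then 1 else 0) $ b))
           = a * x + cnj a * cnj x + A $ k $ k"
      using quad2[OF jk, of A x] z herm[of k j] by (simp add: a_def)
    show ?thesis using nn[of "\<chi> i. if i = j then x else if i = k then 1 else 0"] unfolding e .
  qed
  show ?thesis
  proof (rule ccontr)
    assume "A $ j $ k \<noteq> 0"
    then have an: "a \<noteq> 0" by (simp add: a_def)
    then have n2: "0 < (cmod a)^2" by simp
    define t where "t = (\<bar>Re (A $ k $ k)\<bar> + 1) / (2 * (cmod a)^2)"
    define y where "y = - (of_real t * cnj a)"
    have ay: "a * y = - of_real (t * (cmod a)^2)"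
      unfolding y_def using complex_norm_square[of a] by (simp add: mult.commute mult.left_commute)
    have "cnj a * cnj y = cnj (a * y)" by simp
    then have "a * y + cnj a * cnj y + A $ k $ k = of_real (- 2 * t * (cmod a)^2) + A $ k $ k"
      unfolding ay by simp
    then have "Re (a * y + cnj a * cnj y + A $ k $ k) = - 2 * t * (cmod a)^2 + Re (A $ k $ k)"
      by simp
    moreover have "2 * t * (cmod a)^2 = \<bar>Re (A $ k $ k)\<bar> + 1"
      using n2 by (simp add: t_def)
    ultimately show False using Q[of y] by linarith
  qed
qed

lemma smooth3_const: "smooth3 (\<lambda>p. c)"
proof -
  have "\<exists>c. f = (\<lambda>p::pt. c) \<Longrightarrow> smooth3 f" for f
  proof (coinduction arbitrary: f rule: smooth3.coinduct)
    case (smooth3 f)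
    then obtain c where f: "f = (\<lambda>p. c)" by blast
    have d: "frechet_derivative f (at x) = (\<lambda>v. 0)" for x
      unfolding f by (rule frechet_derivative_at[symmetric]) (rule has_derivative_const)
    show ?case
      by (rule exI[of _ f]) (auto simp: d f)
  qed
  then show ?thesis by blast
qed

lemma dirderiv_const: "dirderiv (\<lambda>p. c) v x = 0"
proof -
  have "frechet_derivative (\<lambda>p::pt. c) (at x) = (\<lambda>v. 0)"
    by (rule frechet_derivative_at[symmetric]) (rule has_derivative_const)
  then show ?thesis by (simp add: dirderiv_def)
qed

definition h0 :: "pt \<Rightarrow> complex^3^3" where
  "h0 p = (\<chi> a b. if a = 3 \<and> b = 3 then 1 else 0)"

lemma h0_real11: "real11 h0"
  unfolding real11_def h0_def by (auto intro: smooth3_const)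

lemma h0_nonneg: "nonneg11 h0"
  unfolding nonneg11_def
proof (intro allI)
  fix p and v :: "complex^3"
  have g: "(\<Sum>b\<in>UNIV. h0 p $ a $ b * v $ a * cnj (v $ b)) = (if a = 3 then v $ 3 * cnj (v $ 3) else 0)" for a
  proof (cases "a = 3")
    case True
    have "h0 p $ a $ b * v $ a * cnj (v $ b) = (if b = 3 then v $ 3 * cnj (v $ 3) else 0)" for b
      using True by (simp add: h0_def)
    then show ?thesis using True by simp
  next
    case False then show ?thesis by (simp add: h0_def)
  qed
  have "(\<Sum>a\<in>UNIV. \<Sum>b\<in>UNIV. h0 p $ a $ b * v $ a * cnj (v $ b)) = v $ 3 * cnj (v $ 3)"
    unfolding g by simp
  then show "0 \<le> Re (\<Sum>a\<in>UNIV. \<Sum>b\<in>UNIV. h0 p $ a $ b * v $ a * cnj (v $ b))"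
    by simp
qed

lemma h0_closed: "closed11 h0"
proof -
  have c: "(\<lambda>q. h0 q $ j $ k) = (\<lambda>q. (if j = 3 \<and> k = 3 then 1 else 0))" for j k
    by (simp add: h0_def)
  show ?thesis unfolding closed11_def c wirt_def wirtbar_def dirderiv_const by simp
qed

lemma h0_inv: "invariant11 \<alpha> \<beta> \<tau> h0"
  unfolding invariant11_def Let_def by (auto simp: h0_def)

lemma minor_single: "minor A [i] [j] = A $ i $ j"
proof -
  have "{\<sigma>. \<sigma> permutes {..<Suc 0}} = {id}"
    using permutes_sing[of _ 0] by (auto simp: lessThan_Suc)
  then show ?thesis unfolding minor_def by simp
qed

lemma h0_wedge: "wedge_pow_nonzero h0 1"
  unfolding wedge_pow_nonzero_def
  by (rule exI[of _ 0], rule exI[of _ "[3]"], rule exI[of _ "[3]"]) (simp add: minor_single h0_def)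

lemma minor_zero_row:
  assumes "a0 < length I" "\<And>b. A $ (I ! a0) $ b = 0"
  shows "minor A I J = 0"
  unfolding minor_def
proof (rule sum.neutral, intro ballI)
  fix \<sigma> show "of_int (sign \<sigma>) * (\<Prod>a<length I. A $ (I ! a) $ (J ! \<sigma> a)) = 0"
    using assms by (subst prod_zero) auto
qed

lemma upper:
  fixes h :: "pt \<Rightarrow> complex^3^3" and \<alpha> \<beta> :: complex
  assumes ha: "\<alpha>^2 - (1 + \<i>) * \<alpha> + 1 = 0"
      and hb: "\<beta>^2 - (1 + \<i>) * \<beta> + 1 = 0"
      and ne: "\<alpha> \<noteq> \<beta>"
      and r11: "real11 h" and nn: "nonneg11 h" and cl: "closed11 h"
      and inv: "invariant11 \<alpha> \<beta> \<tau> h"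
      and w: "wedge_pow_nonzero h k"
  shows "k \<le> 1"
proof (rule ccontr)
  assume k: "\<not> k \<le> 1"
  have herm: "h p $ a $ b = cnj (h p $ b $ a)" for p a b using r11 unfolding real11_def by blast
  have row0: "h p $ a $ b = 0" if "a \<noteq> 3" for p a b
  proof -
    have a12: "a = 1 \<or> a = 2" using that exhaust_3[of a] by auto
    have "h p $ a $ a = 0" by (rule hjj_zero[OF ha hb ne r11 nn cl inv a12])
    moreover have "0 \<le> Re (\<Sum>a\<in>UNIV. \<Sum>b\<in>UNIV. h p $ a $ b * v $ a * cnj (v $ b))" for v :: "complex^3"
      using nn unfolding nonneg11_def by blast
    ultimately show ?thesis using psd_offdiag[of "h p" a b] herm by blast
  qed
  obtain p I J where d: "distinct I" and l: "length I = k" and mz: "minor (h p) I J \<noteq> 0"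
    using w unfolding wedge_pow_nonzero_def by blast
  have "I ! 0 \<noteq> I ! 1" using d k l by (simp add: nth_eq_iff_index_eq)
  moreover have "0 < length I" "1 < length I" using k l by auto
  ultimately obtain a0 where a0: "a0 < length I" "I ! a0 \<noteq> 3"
    by (cases "I ! 0 = 3") auto
  have "minor (h p) I J = 0"
    by (rule minor_zero_row[OF a0(1)]) (rule row0[OF a0(2)])
  with mz show False by simp
qed

theorem mainTheorem5:
  fixes \<alpha> \<beta> \<tau> :: complex
  assumes "\<alpha>^2 - (1 + \<i>) * \<alpha> + 1 = 0"
      and "\<beta>^2 - (1 + \<i>) * \<beta> + 1 = 0"
      and "\<alpha> \<noteq> \<beta>"
      and "Im \<tau> > 0"
  shows "kahler_rank_M \<alpha> \<beta> \<tau> = 1"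
proof -
  let ?S = "{k. \<exists>h. real11 h \<and> nonneg11 h \<and> closed11 h \<and>
        invariant11 \<alpha> \<beta> \<tau> h \<and> wedge_pow_nonzero h k}"
  have up: "\<And>k. k \<in> ?S \<Longrightarrow> k \<le> 1"
    using upper[OF assms(1-3)] by blast
  have fin: "finite ?S"
    by (rule finite_subset[of _ "{..1}"]) (use up in auto)
  have one: "1 \<in> ?S"
    using h0_real11 h0_nonneg h0_closed h0_inv h0_wedge by blast
  show ?thesis
    unfolding kahler_rank_M_def by (rule Max_eqI[OF fin up one])
qed

end
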